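(* Let $X$ and $Y$ be topological spaces, let $f: X \to X$ and $g: Y \to Y$ be maps, and let $\Phi: X \to \mathbb{R}^n$ and $\Psi: Y \to \mathbb{R}^n$ be probe functions. Suppose $h: X \to Y$ is continuous and surjective with $h \circ f = g \circ h$, and that $h$ is descriptively continuous. If the set of descriptive periodic objects of $f$ (with respect to $\Phi$) is dense in $X$, then the set of descriptive periodic objects of $g$ (with respect to $\Psi$) is dense in $Y$.
   Context: A probe function is an arbitrary function into $\mathbb{R}^n$; for $A \subseteq X$ write $\Phi(A) = \{\Phi(a) : a \in A\}$. Subsets $A, B \subseteq X$ are descriptively near, written $A \,\delta_{\Phi}\, B$, if $\Phi(A) \cap \Phi(B) \neq \emptyset$ (similarly $\delta_{\Psi}$ on $Y$). The map $h$ is descriptively continuous if $A \,\delta_{\Phi}\, B$ implies $h(A) \,\delta_{\Psi}\, h(B)$ for all $A, B \subseteq X$. An object $a \in X$ is a descriptive periodic object of $f$ if $\Phi(f^m(a)) = \Phi(a)$ for some integer $m \geq 1$; analogously $y \in Y$ is a descriptive periodic object of $g$ if $\Psi(g^m(y)) = \Psi(y)$ for some integer $m \geq 1$. *)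

theory Defs
  imports "HOL-Analysis.Analysis"
begin

definition desc_near :: "('a \<Rightarrow> 'v) \<Rightarrow> 'a set \<Rightarrow> 'a set \<Rightarrow> bool" where
  "desc_near \<Phi> A B \<longleftrightarrow> \<Phi> ` A \<inter> \<Phi> ` B \<noteq> {}"

definition desc_continuous ::
  "'a topology \<Rightarrow> ('a \<Rightarrow> 'v) \<Rightarrow> ('b \<Rightarrow> 'v) \<Rightarrow> ('a \<Rightarrow> 'b) \<Rightarrow> bool" where
  "desc_continuous X \<Phi> \<Psi> h \<longleftrightarrow>
     (\<forall>A B. A \<subseteq> topspace X \<and> B \<subseteq> topspace X \<and> desc_near \<Phi> A B
        \<longrightarrow> desc_near \<Psi> (h ` A) (h ` B))"

definition desc_periodic_objects ::
  "'a topology \<Rightarrow> ('a \<Rightarrow> 'a) \<Rightarrow> ('a \<Rightarrow> 'v) \<Rightarrow> 'a set" where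
  "desc_periodic_objects X f \<Phi> =
     {a \<in> topspace X. \<exists>m::nat. m \<ge> 1 \<and> \<Phi> ((f ^^ m) a) = \<Phi> a}"

definition dense_in :: "'a topology \<Rightarrow> 'a set \<Rightarrow> bool" where
  "dense_in X S \<longleftrightarrow> S \<subseteq> topspace X \<and> X closure_of S = topspace X"

end

theory Submission
  imports Defs
begin

lemma iter_comm:
  assumes f_maps: "f ` topspace X \<subseteq> topspace X"
    and h_comm: "\<And>x. x \<in> topspace X \<Longrightarrow> h (f x) = g (h x)"
    and a: "a \<in> topspace X"
  shows "(f ^^ m) a \<in> topspace X \<and> h ((f ^^ m) a) = (g ^^ m) (h a)"
proof (induction m)
  case 0
  then show ?case using a by simp
next
  case (Suc m)
  then show ?case using f_maps h_comm by auto
qed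

theorem lemma4:
  fixes X :: "'a topology" and Y :: "'b topology"
    and f :: "'a \<Rightarrow> 'a" and g :: "'b \<Rightarrow> 'b" and h :: "'a \<Rightarrow> 'b"
    and \<Phi> :: "'a \<Rightarrow> real ^ 'n" and \<Psi> :: "'b \<Rightarrow> real ^ 'n"
  assumes f_maps: "f ` topspace X \<subseteq> topspace X"
    and g_maps: "g ` topspace Y \<subseteq> topspace Y"
    and h_cont: "continuous_map X Y h"
    and h_surj: "h ` topspace X = topspace Y"
    and h_comm: "\<And>x. x \<in> topspace X \<Longrightarrow> h (f x) = g (h x)"
    and h_desc: "desc_continuous X \<Phi> \<Psi> h"
    and dense_f: "dense_in X (desc_periodic_objects X f \<Phi>)"
  shows "dense_in Y (desc_periodic_objects Y g \<Psi>)"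
proof -
  let ?P = "desc_periodic_objects X f \<Phi>"
  let ?Q = "desc_periodic_objects Y g \<Psi>"
  have sub: "h ` ?P \<subseteq> ?Q"
  proof
    fix y assume "y \<in> h ` ?P"
    then obtain a m where a: "a \<in> topspace X" "m \<ge> 1" "\<Phi> ((f ^^ m) a) = \<Phi> a" and y: "y = h a"
      unfolding desc_periodic_objects_def by auto
    have it: "(f ^^ m) a \<in> topspace X" "h ((f ^^ m) a) = (g ^^ m) (h a)"
      using iter_comm[of f X h g a m, OF f_maps h_comm a(1)] by auto
    have "desc_near \<Phi> {(f ^^ m) a} {a}" using a(3) unfolding desc_near_def by simp
    hence "desc_near \<Psi> (h ` {(f ^^ m) a}) (h ` {a})"
      using h_desc it(1) a(1) unfolding desc_continuous_def
      by (metis empty_subsetI insert_subset)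
    hence "\<Psi> ((g ^^ m) (h a)) = \<Psi> (h a)" using it(2) unfolding desc_near_def by simp
    moreover have "h a \<in> topspace Y" using h_surj a(1) by blast
    ultimately show "y \<in> ?Q" unfolding desc_periodic_objects_def using y a(2) by auto
  qed
  have "topspace Y = h ` (X closure_of ?P)" using dense_f h_surj unfolding dense_in_def by simp
  also have "\<dots> \<subseteq> Y closure_of (h ` ?P)" by (rule continuous_map_image_closure_subset[OF h_cont])
  also have "\<dots> \<subseteq> Y closure_of ?Q" by (rule closure_of_mono[OF sub])
  finally have "topspace Y \<subseteq> Y closure_of ?Q" .
  moreover have "?Q \<subseteq> topspace Y" unfolding desc_periodic_objects_def by auto
  moreover have "Y closure_of ?Q \<subseteq> topspace Y" by (rule closure_of_subset_topspace)
  ultimately show ?thesis unfolding dense_in_def by (intro conjI equalityI)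
qed

end
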